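(* Let $\mathcal C$ be a concept hierarchy, $r_1,r_2,\epsilon\in[0,1]$ with $r_1\le r_2(1-\epsilon)$, $m$ a positive integer, and let $\mathcal A_1$ and $\mathcal H$ be the networks defined below (with $\mathcal H$ having a fixed failed set $F$ satisfying the stated constraint). Then $\mathcal H$ $implements_1$ $\mathcal A_1$: for every $B\subseteq C_0$, in the executions of $\mathcal A_1$ and $\mathcal H$ on input $B$, for every concept $c$, if $rep(c)$ fires at time $level(c)$ in $\mathcal A_1$, then at least $m(1-\epsilon)$ of the neurons in $reps(c)$ fire at time $level(c)$ in $\mathcal H$.
   Context: Concept hierarchies: fix positive integers $\ell_{max},n,k$. A universal set $D$ of concepts is partitioned into disjoint sets $D_0,\dots,D_{\ell_{max}}$ with $|D_0|=n$; $level(c)=\ell$ for $c\in D_\ell$. A concept hierarchy $\mathcal C$ consists of $C\subseteq D$, with $C_\ell=C\cap D_\ell$, and for each $c\in C_\ell$ with $1\le\ell\le\ell_{max}$ a set $children(c)\subseteq C_{\ell-1}$, such that $|C_{\ell_{max}}|=k$, $|children(c)|=k$ for all such $c$, and $children(c)\cap children(c')=\emptyset$ for distinct $c,c'\in C_\ell$. Common network dynamics: neurons partitioned into layers $N_0,\dots,N_{\ell_{max}}$; threshold $\tau$; weights $w(u,v)\in\{0,1\}$ for $u\in N_{\ell-1}$, $v\in N_\ell$. Failed neurons never fire. A non-failed neuron $v\in N_\ell$, $\ell\ge1$, does not fire at time 0 and fires at time $t\ge1$ iff $\sum_{u\in N_{\ell-1}}w(u,v)x_u(t-1)\ge\tau$,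 where $x_u(s)\in\{0,1\}$ indicates whether $u$ fires at time $s$. $\mathcal A_1$: no failures; each $c\in D_0$ has $rep(c)\in N_0$, each $c\in C$ with $level(c)\ge1$ has $rep(c)\in N_{level(c)}$, all distinct; $w(u,v)=1$ iff $v=rep(c)$, $u=rep(c')$ for a child $c'$ of $c$, else $0$; $\tau=r_2k$. Input $B\subseteq C_0$: the layer-0 neurons $rep(b)$, $b\in B$, fire at time 0, no other layer-0 neuron fires at time 0, and no layer-0 neuron fires at any other time. $\mathcal H$: each $c\in D_0$ has a set $reps(c)$ of $m$ neurons in $N_0$, each $c\in C$ with $level(c)\ge1$ a set $reps(c)$ of $m$ neurons in $N_{level(c)}$, all pairwise disjoint; $w(u,v)=1$ iff $v\in reps(c)$ and $u\in reps(c')$ for a child $c'$ of $c$, else $0$; $\tau=r_2km(1-\epsilon)$. A fixed set $F$ of neurons is failed, such that for every concept $c$ at least $m(1-\epsilon)$ neurons of $reps(c)$ are not in $F$. Input $B\subseteq C_0$: a layer-0 neuron fires at time 0 iff it is in $\bigcup_{b\in B}reps(b)\setminus F$, and no layer-0 neuron fires at any other time. *)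

theory Defs
  imports Complex_Main
begin

definition concept_hierarchy ::
  "'c set \<Rightarrow> ('c \<Rightarrow> nat) \<Rightarrow> nat \<Rightarrow> nat \<Rightarrow> nat \<Rightarrow> 'c set \<Rightarrow> ('c \<Rightarrow> 'c set) \<Rightarrow> bool" where
  "concept_hierarchy D level lmax n k C children \<longleftrightarrow>
     0 < lmax \<and> 0 < n \<and> 0 < k \<and>
     (\<forall>c\<in>D. level c \<le> lmax) \<and>
     finite {c\<in>D. level c = 0} \<and> card {c\<in>D. level c = 0} = n \<and>
     C \<subseteq> D \<and>
     finite {c\<in>C. level c = lmax} \<and> card {c\<in>C. level c = lmax} = k \<and>
     (\<forall>c\<in>C. 1 \<le> level c \<longrightarrow>
        children c \<subseteq> {c'\<in>C. level c' = level c - 1} \<and> finite (children c) \<and> card (children c) = k) \<and>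
     (\<forall>c\<in>C. \<forall>c'\<in>C. 1 \<le> level c \<longrightarrow> level c' = level c \<longrightarrow> c \<noteq> c' \<longrightarrow>
        children c \<inter> children c' = {})"

definition rep_domain :: "'c set \<Rightarrow> ('c \<Rightarrow> nat) \<Rightarrow> 'c set \<Rightarrow> 'c set" where
  "rep_domain D level C = {c\<in>D. level c = 0} \<union> {c\<in>C. 1 \<le> level c}"

definition layered_network :: "'n set \<Rightarrow> ('n \<Rightarrow> nat) \<Rightarrow> nat \<Rightarrow> bool" where
  "layered_network N layer lmax \<longleftrightarrow> finite N \<and> (\<forall>v\<in>N. layer v \<le> lmax)"

primrec fired :: "'n set \<Rightarrow> ('n \<Rightarrow> nat) \<Rightarrow> ('n \<Rightarrow> 'n \<Rightarrow> real) \<Rightarrow> real \<Rightarrow> 'n set \<Rightarrow> 'n set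
                  \<Rightarrow> nat \<Rightarrow> 'n set" where
  "fired N layer w tau F I0 0 = {v\<in>N. layer v = 0 \<and> v \<notin> F \<and> v \<in> I0}"
| "fired N layer w tau F I0 (Suc t) =
     {v\<in>N. v \<notin> F \<and> 1 \<le> layer v \<and>
        tau \<le> (\<Sum>u\<in>{u\<in>N. layer u + 1 = layer v}.
                  w u v * (if u \<in> fired N layer w tau F I0 t then 1 else 0))}"

definition A1_weight :: "'c set \<Rightarrow> ('c \<Rightarrow> nat) \<Rightarrow> ('c \<Rightarrow> 'c set) \<Rightarrow> ('c \<Rightarrow> 'n) \<Rightarrow> 'n \<Rightarrow> 'n \<Rightarrow> real" where
  "A1_weight C level children rep u v =
     (if \<exists>c\<in>C. 1 \<le> level c \<and> v = rep c \<and> (\<exists>c'\<in>children c. u = rep c') then 1 else 0)"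

definition H_weight :: "'c set \<Rightarrow> ('c \<Rightarrow> nat) \<Rightarrow> ('c \<Rightarrow> 'c set) \<Rightarrow> ('c \<Rightarrow> 'n set) \<Rightarrow> 'n \<Rightarrow> 'n \<Rightarrow> real" where
  "H_weight C level children reps u v =
     (if \<exists>c\<in>C. 1 \<le> level c \<and> v \<in> reps c \<and> (\<exists>c'\<in>children c. u \<in> reps c') then 1 else 0)"

end

theory Submission
  imports Defs
begin

theorem theorem7p1:
  fixes D C :: "'c set" and level :: "'c \<Rightarrow> nat" and children :: "'c \<Rightarrow> 'c set"
    and lmax n k m :: nat and r1 r2 \<epsilon> :: real
    and N1 :: "'n1 set" and layer1 :: "'n1 \<Rightarrow> nat" and rep :: "'c \<Rightarrow> 'n1"
    and N2 :: "'n2 set" and layer2 :: "'n2 \<Rightarrow> nat" and reps :: "'c \<Rightarrow> 'n2 set"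
    and F :: "'n2 set"
  assumes hier: "concept_hierarchy D level lmax n k C children"
    and r1: "0 \<le> r1" "r1 \<le> 1" and r2: "0 \<le> r2" "r2 \<le> 1" and eps: "0 \<le> \<epsilon>" "\<epsilon> \<le> 1"
    and r1r2: "r1 \<le> r2 * (1 - \<epsilon>)"
    and m: "0 < m"
    (* network A_1 *)
    and net1: "layered_network N1 layer1 lmax"
    and rep_inj: "inj_on rep (rep_domain D level C)"
    and rep_layer: "\<forall>c\<in>rep_domain D level C. rep c \<in> N1 \<and> layer1 (rep c) = level c"
    (* network H *)
    and net2: "layered_network N2 layer2 lmax"
    and reps_card: "\<forall>c\<in>rep_domain D level C. finite (reps c) \<and> card (reps c) = m"
    and reps_layer: "\<forall>c\<in>rep_domain D level C. reps c \<subseteq> N2 \<and> (\<forall>v\<in>reps c. layer2 v = level c)"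
    and reps_disj: "\<forall>c\<in>rep_domain D level C. \<forall>c'\<in>rep_domain D level C. c \<noteq> c' \<longrightarrow> reps c \<inter> reps c' = {}"
    and F_ok: "\<forall>c\<in>rep_domain D level C. real (card (reps c - F)) \<ge> real m * (1 - \<epsilon>)"
  shows "\<forall>B \<subseteq> {c\<in>C. level c = 0}. \<forall>c\<in>C.
           rep c \<in> fired N1 layer1 (A1_weight C level children rep) (r2 * real k) {} (rep ` B) (level c)
           \<longrightarrow> real (card {v\<in>reps c. v \<in> fired N2 layer2 (H_weight C level children reps)
                                         (r2 * real k * real m * (1 - \<epsilon>)) F (\<Union>b\<in>B. reps b) (level c)})
               \<ge> real m * (1 - \<epsilon>)"
proof (intro allI impI ballI)
  fix B c
  assume B: "B \<subseteq> {c\<in>C. level c = 0}" and cC: "c \<in> C"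
  define W1 where "W1 = A1_weight C level children rep"
  define W2 where "W2 = H_weight C level children reps"
  define f1 where "f1 = fired N1 layer1 W1 (r2 * real k) {} (rep ` B)"
  define f2 where "f2 = fired N2 layer2 W2 (r2 * real k * real m * (1 - \<epsilon>)) F (\<Union>b\<in>B. reps b)"
  have CD: "C \<subseteq> D" using hier unfolding concept_hierarchy_def by blast
  have inRD: "c \<in> rep_domain D level C" if "c \<in> C" for c
    using that CD unfolding rep_domain_def by auto
  have ch: "children c \<subseteq> {c'\<in>C. level c' = level c - 1} \<and> finite (children c)"
    if "c \<in> C" "1 \<le> level c" for c
    using hier that unfolding concept_hierarchy_def by blast
  have fin1: "finite N1" using net1 unfolding layered_network_def by blast
  have fin2: "finite N2" using net2 unfolding layered_network_def by blast
  have me: "0 \<le> real m * (1 - \<epsilon>)" using eps by simp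
  have key: "\<forall>c\<in>C. level c = l \<longrightarrow> rep c \<in> f1 l \<longrightarrow>
              real m * (1 - \<epsilon>) \<le> real (card (reps c \<inter> f2 l))" for l
  proof (induction l)
    case 0
    show ?case
    proof (intro ballI impI)
      fix c assume c: "c \<in> C" "level c = 0" "rep c \<in> f1 0"
      then have "rep c \<in> rep ` B" unfolding f1_def by simp
      then obtain b where b: "b \<in> B" "rep c = rep b" by blast
      have "b \<in> rep_domain D level C" using B b inRD by blast
      then have cb: "c = b" using rep_inj b inRD[OF c(1)] by (meson inj_onD)
      have sub: "reps c - F \<subseteq> reps c \<inter> f2 0"
        using reps_layer inRD[OF c(1)] c(2) b cb unfolding f2_def by auto
      have "card (reps c - F) \<le> card (reps c \<inter> f2 0)"
        using card_mono[OF _ sub] reps_card inRD[OF c(1)] by auto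
      then show "real m * (1 - \<epsilon>) \<le> real (card (reps c \<inter> f2 0))"
        using F_ok inRD[OF c(1)] by force
    qed
  next
    case (Suc l)
    show ?case
    proof (intro ballI impI)
      fix c assume c: "c \<in> C" "level c = Suc l" "rep c \<in> f1 (Suc l)"
      have chc: "children c \<subseteq> {c'\<in>C. level c' = l}" "finite (children c)"
        using ch[OF c(1)] c(2) by auto
      define K where "K = {c'\<in>children c. rep c' \<in> f1 l}"
      have finK: "finite K" using chc unfolding K_def by simp
      define U1 where "U1 = {u\<in>N1. layer1 u + 1 = layer1 (rep c)}"
      have thr1: "r2 * real k \<le> (\<Sum>u\<in>U1. W1 u (rep c) * (if u \<in> f1 l then 1 else 0))"
        using c(3) unfolding f1_def U1_def by simp
      have pw1: "W1 u (rep c) * (if u \<in> f1 l then 1 else 0) = (if u \<in> rep ` K then 1 else 0)" for u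
      proof -
        have "W1 u (rep c) = (if u \<in> rep ` children c then 1 else 0)"
        proof (cases "u \<in> rep ` children c")
          case True then show ?thesis using c unfolding W1_def A1_weight_def by auto
        next
          case False
          have "\<not> (\<exists>c0\<in>C. 1 \<le> level c0 \<and> rep c = rep c0 \<and> (\<exists>c'\<in>children c0. u = rep c'))"
          proof
            assume "\<exists>c0\<in>C. 1 \<le> level c0 \<and> rep c = rep c0 \<and> (\<exists>c'\<in>children c0. u = rep c')"
            then obtain c0 c' where h: "c0 \<in> C" "rep c = rep c0" "c' \<in> children c0" "u = rep c'" by blast
            have "c = c0" using rep_inj inRD[OF c(1)] inRD[OF h(1)] h(2) by (meson inj_onD)
            then show False using False h by blast
          qed
          then show ?thesis using False unfolding W1_def A1_weight_def by auto
        qed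
        moreover have "u \<in> rep ` K \<longleftrightarrow> u \<in> rep ` children c \<and> u \<in> f1 l"
          unfolding K_def by auto
        ultimately show ?thesis by auto
      qed
      have "(\<Sum>u\<in>U1. W1 u (rep c) * (if u \<in> f1 l then 1 else 0)) = (\<Sum>u\<in>U1. (if u \<in> rep ` K then 1 else 0))"
        using pw1 by simp
      also have "\<dots> = real (card {u\<in>U1. u \<in> rep ` K})"
        using fin1 unfolding U1_def by (simp add: sum.inter_filter[symmetric])
      also have "\<dots> \<le> real (card (rep ` K))"
        using finK by (intro of_nat_mono card_mono) auto
      also have "\<dots> \<le> real (card K)" using card_image_le[OF finK] by simp
      finally have rk: "r2 * real k \<le> real (card K)" using thr1 by linarith
      have Kprop: "c' \<in> C \<and> level c' = l \<and> rep c' \<in> f1 l" if "c' \<in> K" for c'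
        using that chc unfolding K_def by auto
      have IHK: "real m * (1 - \<epsilon>) \<le> real (card (reps c' \<inter> f2 l))" if "c' \<in> K" for c'
        using Suc.IH Kprop[OF that] by blast
      define S where "S = (\<Union>c'\<in>K. reps c' \<inter> f2 l)"
      have cardS: "card S = (\<Sum>c'\<in>K. card (reps c' \<inter> f2 l))"
        unfolding S_def
      proof (rule card_UN_disjoint[OF finK])
        show "\<forall>i\<in>K. finite (reps i \<inter> f2 l)"
          using reps_card inRD Kprop by blast
        show "\<forall>i\<in>K. \<forall>j\<in>K. i \<noteq> j \<longrightarrow> reps i \<inter> f2 l \<inter> (reps j \<inter> f2 l) = {}"
          using reps_disj inRD Kprop by blast
      qed
      have "real (card K) * (real m * (1 - \<epsilon>)) = (\<Sum>c'\<in>K. real m * (1 - \<epsilon>))" by simp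
      also have "\<dots> \<le> (\<Sum>c'\<in>K. real (card (reps c' \<inter> f2 l)))"
        using IHK by (rule sum_mono)
      also have "\<dots> = real (card S)" using cardS by simp
      finally have Sbig: "r2 * real k * real m * (1 - \<epsilon>) \<le> real (card S)"
        using mult_right_mono[OF rk me] by (simp add: mult.assoc)
      have "reps c - F \<subseteq> f2 (Suc l)"
      proof
        fix v assume v: "v \<in> reps c - F"
        have vN: "v \<in> N2" "layer2 v = Suc l" using reps_layer inRD[OF c(1)] v c(2) by auto
        define U2 where "U2 = {u\<in>N2. layer2 u + 1 = layer2 v}"
        have pw2: "W2 u v * (if u \<in> f2 l then 1 else 0) = (if u \<in> (\<Union>c'\<in>children c. reps c') \<inter> f2 l then 1 else 0)" for u
        proof -
          have "W2 u v = (if u \<in> (\<Union>c'\<in>children c. reps c') then 1 else 0)"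
          proof (cases "u \<in> (\<Union>c'\<in>children c. reps c')")
            case True then show ?thesis using c v unfolding W2_def H_weight_def by auto
          next
            case False
            have "\<not> (\<exists>c0\<in>C. 1 \<le> level c0 \<and> v \<in> reps c0 \<and> (\<exists>c'\<in>children c0. u \<in> reps c'))"
            proof
              assume "\<exists>c0\<in>C. 1 \<le> level c0 \<and> v \<in> reps c0 \<and> (\<exists>c'\<in>children c0. u \<in> reps c')"
              then obtain c0 c' where h: "c0 \<in> C" "v \<in> reps c0" "c' \<in> children c0" "u \<in> reps c'" by blast
              have "c = c0" using reps_disj inRD[OF c(1)] inRD[OF h(1)] h(2) v by blast
              then show False using False h by blast
            qed
            then show ?thesis using False unfolding W2_def H_weight_def by auto
          qed
          then show ?thesis by auto
        qed
        have "(\<Sum>u\<in>U2. W2 u v * (if u \<in> f2 l then 1 else 0))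
              = (\<Sum>u\<in>U2. (if u \<in> (\<Union>c'\<in>children c. reps c') \<inter> f2 l then 1 else 0))"
          using pw2 by simp
        also have "\<dots> = real (card {u\<in>U2. u \<in> (\<Union>c'\<in>children c. reps c') \<inter> f2 l})"
          using fin2 unfolding U2_def by (simp add: sum.inter_filter[symmetric])
        finally have eq: "(\<Sum>u\<in>U2. W2 u v * (if u \<in> f2 l then 1 else 0))
              = real (card {u\<in>U2. u \<in> (\<Union>c'\<in>children c. reps c') \<inter> f2 l})" .
        have SU: "S \<subseteq> {u\<in>U2. u \<in> (\<Union>c'\<in>children c. reps c') \<inter> f2 l}"
        proof
          fix u assume "u \<in> S"
          then obtain c' where h: "c' \<in> K" "u \<in> reps c'" "u \<in> f2 l" unfolding S_def by blast
          have "u \<in> N2" "layer2 u = l" using reps_layer inRD Kprop[OF h(1)] h(2) by auto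
          then show "u \<in> {u\<in>U2. u \<in> (\<Union>c'\<in>children c. reps c') \<inter> f2 l}"
            using h vN unfolding U2_def K_def by auto
        qed
        have "card S \<le> card {u\<in>U2. u \<in> (\<Union>c'\<in>children c. reps c') \<inter> f2 l}"
          by (rule card_mono[OF _ SU]) (use fin2 in \<open>simp add: U2_def\<close>)
        then have "r2 * real k * real m * (1 - \<epsilon>) \<le> (\<Sum>u\<in>U2. W2 u v * (if u \<in> f2 l then 1 else 0))"
          using eq Sbig by linarith
        then show "v \<in> f2 (Suc l)" using v vN unfolding U2_def f2_def by simp
      qed
      then have sub: "reps c - F \<subseteq> reps c \<inter> f2 (Suc l)" by blast
      have "card (reps c - F) \<le> card (reps c \<inter> f2 (Suc l))"
        using card_mono[OF _ sub] reps_card inRD[OF c(1)] by auto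
      then show "real m * (1 - \<epsilon>) \<le> real (card (reps c \<inter> f2 (Suc l)))"
        using F_ok inRD[OF c(1)] by force
    qed
  qed
  assume "rep c \<in> fired N1 layer1 (A1_weight C level children rep) (r2 * real k) {} (rep ` B) (level c)"
  then have "real m * (1 - \<epsilon>) \<le> real (card (reps c \<inter> f2 (level c)))"
    using key cC unfolding f1_def W1_def by blast
  moreover have "{v\<in>reps c. v \<in> f2 (level c)} = reps c \<inter> f2 (level c)" by blast
  ultimately show "real m * (1 - \<epsilon>) \<le> real (card {v\<in>reps c. v \<in> fired N2 layer2 (H_weight C level children reps)
                                         (r2 * real k * real m * (1 - \<epsilon>)) F (\<Union>b\<in>B. reps b) (level c)})"
    unfolding f2_def W2_def by simp
qed

end
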